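(* Let $P=\bigsqcup_{n\ge1}P_n$ with the operations $\dashv,\vdash,\perp$ described in the context, and extend these operations bilinearly to the graded vector space $\bigoplus_{n\ge1}K[P_n]$, where $K[P_n]$ is the $K$-vector space with basis $P_n$. Then $\bigl(\bigoplus_{n\ge1}K[P_n];\dashv,\vdash,\perp\bigr)$ is an associative trialgebra. Moreover, it is the free associative trialgebra on one generator $\{0\}\in P_1$: for every associative trialgebra $A$ and every $a\in A$ there is a unique morphism of associative trialgebras $\bigoplus_{n\ge1}K[P_n]\to A$ sending $\{0\}$ to $a$.
   Context: Let $K$ be a field. An associative trialgebra is a $K$-vector space $A$ with three bilinear operations $\dashv$ (left), $\vdash$ (right), $\perp$ (middle), $A\otimes A\to A$, satisfying for all $x,y,z\in A$ the following 11 relations: (1) $(x\dashv y)\dashv z=x\dashv(y\dashv z)$; (2) $(x\dashv y)\dashv z=x\dashv(y\vdash z)$; (3) $(x\vdash y)\dashv z=x\vdash(y\dashv z)$; (4) $(x\dashv y)\vdash z=x\vdash(y\vdash z)$; (5) $(x\vdash y)\vdash z=x\vdash(y\vdash z)$; (6) $(x\dashv y)\dashv z=x\dashv(y\perp z)$; (7) $(x\perp y)\dashv z=x\perp(y\dashv z)$; (8) $(x\dashv y)\perp z=x\perp(y\vdash z)$; (9) $(x\vdash y)\perp z=x\vdash(y\perp z)$; (10) $(x\perp y)\vdash z=x\vdash(y\vdash z)$; (11) $(x\perp y)\perp z=x\perp(y\perp z)$. A morphism of associative trialgebras is a linear map preserving all three operations. For $n\ge1$ let $[n-1]=\{0,1,\dots,n-1\}$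 and let $P_n$ be the set of nonempty subsets of $[n-1]$. For $p,q\ge1$ let $\mathrm{bij}:[p-1]\sqcup[q-1]\to[p+q-1]$ be the bijection which is the identity on the first copy and sends $k$ in the second copy to $p+k$. For $X\in P_p$ and $Y\in P_q$ define elements of $P_{p+q}$: - $X\dashv Y=\mathrm{bij}(X)$, the image of $X$ viewed in the first copy; - $X\vdash Y=\mathrm{bij}(Y)$, the image of $Y$ viewed in the second copy; - $X\perp Y=\mathrm{bij}(X\sqcup Y)$. *)

theory Defs
  imports Main "HOL.Vector_Spaces" "HOL-Library.Poly_Mapping"
begin

definition bilinear_op :: "('k::field \<Rightarrow> 'a::ab_group_add \<Rightarrow> 'a) \<Rightarrow> ('a \<Rightarrow> 'a \<Rightarrow> 'a) \<Rightarrow> bool" where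
  "bilinear_op scale f \<longleftrightarrow>
     (\<forall>x. Vector_Spaces.linear scale scale (f x)) \<and> (\<forall>y. Vector_Spaces.linear scale scale (\<lambda>x. f x y))"

definition assoc_trialgebra ::
  "('k::field \<Rightarrow> 'a::ab_group_add \<Rightarrow> 'a) \<Rightarrow> ('a \<Rightarrow> 'a \<Rightarrow> 'a) \<Rightarrow> ('a \<Rightarrow> 'a \<Rightarrow> 'a) \<Rightarrow> ('a \<Rightarrow> 'a \<Rightarrow> 'a) \<Rightarrow> bool" where
  "assoc_trialgebra scale l r m \<longleftrightarrow>
     vector_space scale \<and> bilinear_op scale l \<and> bilinear_op scale r \<and> bilinear_op scale m \<and>
     (\<forall>x y z.
        l (l x y) z = l x (l y z) \<and>
        l (l x y) z = l x (r y z) \<and>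
        l (r x y) z = r x (l y z) \<and>
        r (l x y) z = r x (r y z) \<and>
        r (r x y) z = r x (r y z) \<and>
        l (l x y) z = l x (m y z) \<and>
        l (m x y) z = m x (l y z) \<and>
        m (l x y) z = m x (r y z) \<and>
        m (r x y) z = r x (m y z) \<and>
        r (m x y) z = r x (r y z) \<and>
        m (m x y) z = m x (m y z))"

definition trialgebra_morphism ::
  "('k::field \<Rightarrow> 'a::ab_group_add \<Rightarrow> 'a) \<Rightarrow> ('a \<Rightarrow> 'a \<Rightarrow> 'a) \<Rightarrow> ('a \<Rightarrow> 'a \<Rightarrow> 'a) \<Rightarrow> ('a \<Rightarrow> 'a \<Rightarrow> 'a) \<Rightarrow>
   ('k \<Rightarrow> 'b::ab_group_add \<Rightarrow> 'b) \<Rightarrow> ('b \<Rightarrow> 'b \<Rightarrow> 'b) \<Rightarrow> ('b \<Rightarrow> 'b \<Rightarrow> 'b) \<Rightarrow> ('b \<Rightarrow> 'b \<Rightarrow> 'b) \<Rightarrow>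
   ('a \<Rightarrow> 'b) \<Rightarrow> bool" where
  "trialgebra_morphism s1 l1 r1 m1 s2 l2 r2 m2 \<phi> \<longleftrightarrow>
     Vector_Spaces.linear s1 s2 \<phi> \<and>
     (\<forall>x y. \<phi> (l1 x y) = l2 (\<phi> x) (\<phi> y) \<and> \<phi> (r1 x y) = r2 (\<phi> x) (\<phi> y) \<and>
            \<phi> (m1 x y) = m2 (\<phi> x) (\<phi> y))"

text \<open>P = disjoint union of the P_n: an element of P_n is encoded as the pair (n, X)
 with X a nonempty subset of {0..n-1}.\<close>

typedef pset = "{(n::nat, X::nat set). 1 \<le> n \<and> X \<noteq> {} \<and> X \<subseteq> {..<n}}"
  by (rule exI[of _ "(1, {0})"]) auto

definition pset_left :: "pset \<Rightarrow> pset \<Rightarrow> pset" where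
  "pset_left x y = (case Rep_pset x of (p, X) \<Rightarrow> case Rep_pset y of (q, Y) \<Rightarrow>
      Abs_pset (p + q, X))"

definition pset_right :: "pset \<Rightarrow> pset \<Rightarrow> pset" where
  "pset_right x y = (case Rep_pset x of (p, X) \<Rightarrow> case Rep_pset y of (q, Y) \<Rightarrow>
      Abs_pset (p + q, (\<lambda>k. p + k) ` Y))"

definition pset_mid :: "pset \<Rightarrow> pset \<Rightarrow> pset" where
  "pset_mid x y = (case Rep_pset x of (p, X) \<Rightarrow> case Rep_pset y of (q, Y) \<Rightarrow>
      Abs_pset (p + q, X \<union> (\<lambda>k. p + k) ` Y))"

definition pm_scale :: "'k::field \<Rightarrow> (pset \<Rightarrow>\<^sub>0 'k) \<Rightarrow> (pset \<Rightarrow>\<^sub>0 'k)" where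
  "pm_scale c f = Poly_Mapping.map (\<lambda>v. c * v) f"

definition bilin_ext :: "(pset \<Rightarrow> pset \<Rightarrow> pset) \<Rightarrow> (pset \<Rightarrow>\<^sub>0 'k::field) \<Rightarrow> (pset \<Rightarrow>\<^sub>0 'k) \<Rightarrow> (pset \<Rightarrow>\<^sub>0 'k)" where
  "bilin_ext op f g =
     (\<Sum>x\<in>Poly_Mapping.keys f. \<Sum>y\<in>Poly_Mapping.keys g. Poly_Mapping.single (op x y) (Poly_Mapping.lookup f x * Poly_Mapping.lookup g y))"

definition free_gen :: "pset \<Rightarrow>\<^sub>0 'k::field" where
  "free_gen = Poly_Mapping.single (Abs_pset (1, {0})) 1"

end

theory Submission
  imports Defs
begin


lemma lookup_pm_scale[simp]: "Poly_Mapping.lookup (pm_scale c F) k = c * Poly_Mapping.lookup F k"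
  by (simp add: pm_scale_def Poly_Mapping.map.rep_eq when_def)

lemma pm_vs: "vector_space (pm_scale :: 'k::field \<Rightarrow> _)"
  unfolding vector_space_def module_def
  by (auto intro!: poly_mapping_eqI simp: lookup_add algebra_simps)

lemma pm_expand: "finite S \<Longrightarrow> Poly_Mapping.keys F \<subseteq> S \<Longrightarrow> F = (\<Sum>x\<in>S. Poly_Mapping.single x (Poly_Mapping.lookup F x))"
proof -
  assume S: "finite S" "Poly_Mapping.keys F \<subseteq> S"
  show ?thesis
  proof (rule poly_mapping_eqI)
    fix k
    have "Poly_Mapping.lookup (\<Sum>x\<in>S. Poly_Mapping.single x (Poly_Mapping.lookup F x)) k = (\<Sum>x\<in>S. if x = k then Poly_Mapping.lookup F x else 0)"
      by (simp add: lookup_sum lookup_single when_def)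
    also have "\<dots> = Poly_Mapping.lookup F k" using S by (auto simp: sum.delta in_keys_iff)
    finally show "Poly_Mapping.lookup F k = Poly_Mapping.lookup (\<Sum>x\<in>S. Poly_Mapping.single x (Poly_Mapping.lookup F x)) k" by simp
  qed
qed

lemma pm_induct[case_names zero single add]:
  fixes F :: "'a \<Rightarrow>\<^sub>0 'b::comm_monoid_add"
  assumes "P 0" "\<And>k v. P (Poly_Mapping.single k v)" "\<And>f g. P f \<Longrightarrow> P g \<Longrightarrow> P (f + g)"
  shows "P F"
proof -
  have "P (\<Sum>x\<in>S. Poly_Mapping.single x (Poly_Mapping.lookup F x))" if "finite S" for S
    using that by (induction S rule: finite_induct) (auto intro: assms)
  then show ?thesis using pm_expand[of "Poly_Mapping.keys F" F] by (metis finite_keys order_refl)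
qed

lemma bilin_sup:
  assumes "finite S" "Poly_Mapping.keys F \<subseteq> S" "finite T" "Poly_Mapping.keys G \<subseteq> T"
  shows "bilin_ext op F G = (\<Sum>x\<in>S. \<Sum>y\<in>T. Poly_Mapping.single (op x y) (Poly_Mapping.lookup F x * Poly_Mapping.lookup G y))"
proof -
  have "bilin_ext op F G = (\<Sum>x\<in>Poly_Mapping.keys F. \<Sum>y\<in>T. Poly_Mapping.single (op x y) (Poly_Mapping.lookup F x * Poly_Mapping.lookup G y))"
    unfolding bilin_ext_def
    by (rule sum.cong[OF refl], rule sum.mono_neutral_left) (use assms in \<open>auto simp: in_keys_iff\<close>)
  also have "\<dots> = (\<Sum>x\<in>S. \<Sum>y\<in>T. Poly_Mapping.single (op x y) (Poly_Mapping.lookup F x * Poly_Mapping.lookup G y))"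
    by (rule sum.mono_neutral_left) (use assms in \<open>auto simp: in_keys_iff\<close>)
  finally show ?thesis .
qed

lemma keys_add_sub: "Poly_Mapping.keys (F + G) \<subseteq> Poly_Mapping.keys F \<union> Poly_Mapping.keys G"
  by (auto simp: in_keys_iff lookup_add)

lemma bilin_add_left: "bilin_ext op (F + F') G = bilin_ext op F G + bilin_ext op F' G"
proof -
  let ?S = "Poly_Mapping.keys F \<union> Poly_Mapping.keys F'"
  have "bilin_ext op (F + F') G = (\<Sum>x\<in>?S. \<Sum>y\<in>Poly_Mapping.keys G. Poly_Mapping.single (op x y) (Poly_Mapping.lookup (F+F') x * Poly_Mapping.lookup G y))"
    by (rule bilin_sup) (auto simp: keys_add_sub)
  also have "\<dots> = (\<Sum>x\<in>?S. \<Sum>y\<in>Poly_Mapping.keys G. Poly_Mapping.single (op x y) (Poly_Mapping.lookup F x * Poly_Mapping.lookup G y))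
     + (\<Sum>x\<in>?S. \<Sum>y\<in>Poly_Mapping.keys G. Poly_Mapping.single (op x y) (Poly_Mapping.lookup F' x * Poly_Mapping.lookup G y))"
    by (simp add: lookup_add distrib_right single_add sum.distrib)
  also have "\<dots> = bilin_ext op F G + bilin_ext op F' G"
    by (subst (1 2) bilin_sup[of ?S _ "Poly_Mapping.keys G"]) auto
  finally show ?thesis .
qed

lemma bilin_add_right: "bilin_ext op F (G + G') = bilin_ext op F G + bilin_ext op F G'"
proof -
  let ?T = "Poly_Mapping.keys G \<union> Poly_Mapping.keys G'"
  have "bilin_ext op F (G + G') = (\<Sum>x\<in>Poly_Mapping.keys F. \<Sum>y\<in>?T. Poly_Mapping.single (op x y) (Poly_Mapping.lookup F x * Poly_Mapping.lookup (G+G') y))"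
    by (rule bilin_sup) (auto simp: keys_add_sub)
  also have "\<dots> = (\<Sum>x\<in>Poly_Mapping.keys F. \<Sum>y\<in>?T. Poly_Mapping.single (op x y) (Poly_Mapping.lookup F x * Poly_Mapping.lookup G y))
     + (\<Sum>x\<in>Poly_Mapping.keys F. \<Sum>y\<in>?T. Poly_Mapping.single (op x y) (Poly_Mapping.lookup F x * Poly_Mapping.lookup G' y))"
    by (simp add: lookup_add distrib_left single_add sum.distrib)
  also have "\<dots> = bilin_ext op F G + bilin_ext op F G'"
    by (subst (1 2) bilin_sup[of "Poly_Mapping.keys F" _ ?T]) auto
  finally show ?thesis .
qed

lemma keys_scale_sub: "Poly_Mapping.keys (pm_scale c F) \<subseteq> Poly_Mapping.keys F"
  by (auto simp: in_keys_iff)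

lemma pm_scale_sum: "pm_scale c (sum h S) = (\<Sum>x\<in>S. pm_scale c (h x))"
  by (rule poly_mapping_eqI) (simp add: lookup_sum sum_distrib_left)

lemma pm_scale_single: "pm_scale c (Poly_Mapping.single k v) = Poly_Mapping.single k (c * v)"
  by (simp add: pm_scale_def)

lemma bilin_scale_left: "bilin_ext op (pm_scale c F) G = pm_scale c (bilin_ext op F G)"
proof -
  have "bilin_ext op (pm_scale c F) G = (\<Sum>x\<in>Poly_Mapping.keys F. \<Sum>y\<in>Poly_Mapping.keys G. Poly_Mapping.single (op x y) (Poly_Mapping.lookup (pm_scale c F) x * Poly_Mapping.lookup G y))"
    by (rule bilin_sup) (auto simp: keys_scale_sub)
  also have "\<dots> = pm_scale c (bilin_ext op F G)"
    by (simp add: bilin_ext_def pm_scale_sum pm_scale_single mult.assoc)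
  finally show ?thesis .
qed

lemma bilin_scale_right: "bilin_ext op F (pm_scale c G) = pm_scale c (bilin_ext op F G)"
proof -
  have "bilin_ext op F (pm_scale c G) = (\<Sum>x\<in>Poly_Mapping.keys F. \<Sum>y\<in>Poly_Mapping.keys G. Poly_Mapping.single (op x y) (Poly_Mapping.lookup F x * Poly_Mapping.lookup (pm_scale c G) y))"
    by (rule bilin_sup) (auto simp: keys_scale_sub)
  also have "\<dots> = pm_scale c (bilin_ext op F G)"
    by (simp add: bilin_ext_def pm_scale_sum pm_scale_single algebra_simps)
  finally show ?thesis .
qed

lemma bilin_zero_left[simp]: "bilin_ext op 0 G = 0" by (simp add: bilin_ext_def)
lemma bilin_zero_right[simp]: "bilin_ext op F 0 = 0" by (simp add: bilin_ext_def)

lemma bilin_single: "bilin_ext op (Poly_Mapping.single x c) (Poly_Mapping.single y d) = Poly_Mapping.single (op x y) (c * d)"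
  by (subst bilin_sup[of "{x}" _ "{y}"]) auto

lemma linear_pm: "Vector_Spaces.linear pm_scale pm_scale h \<longleftrightarrow>
   (\<forall>F G. h (F + G) = h F + h G) \<and> (\<forall>c F. h (pm_scale c F) = pm_scale c (h F))"
  unfolding Vector_Spaces.linear_def module_hom_def module_hom_axioms_def
  using pm_vs by (auto simp: vector_space_def module_def)

lemma bilinear_bilin: "bilinear_op pm_scale (bilin_ext op)"
  unfolding bilinear_op_def linear_pm
  by (simp add: bilin_add_left bilin_add_right bilin_scale_left bilin_scale_right)

lemma bilin_assoc:
  assumes "\<And>x y z. o1 (o2 x y) z = o3 x (o4 y z)"
  shows "bilin_ext o1 (bilin_ext o2 F G) H = bilin_ext o3 F (bilin_ext o4 G H)"
proof (induction F arbitrary: G H rule: pm_induct)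
  case (single x c)
  show ?case
  proof (induction G arbitrary: H rule: pm_induct)
    case (single y d)
    show ?case
    proof (induction H rule: pm_induct)
      case (single z e)
      show ?case by (simp add: bilin_single assms mult.assoc)
    qed (simp_all add: bilin_add_right)
  qed (simp_all add: bilin_add_right bilin_add_left)
qed (simp_all add: bilin_add_left)




definition V :: "nat \<Rightarrow> nat set \<Rightarrow> bool" where
  "V n X \<longleftrightarrow> 1 \<le> n \<and> X \<noteq> {} \<and> X \<subseteq> {..<n}"

lemma Rep_V: "Rep_pset x = (n, X) \<Longrightarrow> V n X"
  using Rep_pset[of x] by (auto simp: V_def)

lemma Abs_inv: "V n X \<Longrightarrow> Rep_pset (Abs_pset (n, X)) = (n, X)"
  by (rule Abs_pset_inverse) (auto simp: V_def)

lemma Rep_left: "Rep_pset x = (p, X) \<Longrightarrow> Rep_pset y = (q, Y) \<Longrightarrow> Rep_pset (pset_left x y) = (p + q, X)"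
  unfolding pset_left_def
  by (simp, rule Abs_inv, use Rep_V[of x] Rep_V[of y] in \<open>auto simp: V_def\<close>)

lemma Rep_right: "Rep_pset x = (p, X) \<Longrightarrow> Rep_pset y = (q, Y) \<Longrightarrow> Rep_pset (pset_right x y) = (p + q, (\<lambda>k. p + k) ` Y)"
  unfolding pset_right_def
  by (simp, rule Abs_inv, use Rep_V[of x] Rep_V[of y] in \<open>auto simp: V_def\<close>)

lemma Rep_mid: "Rep_pset x = (p, X) \<Longrightarrow> Rep_pset y = (q, Y) \<Longrightarrow> Rep_pset (pset_mid x y) = (p + q, X \<union> (\<lambda>k. p + k) ` Y)"
  unfolding pset_mid_def
  by (simp, rule Abs_inv, use Rep_V[of x] Rep_V[of y] in \<open>auto simp: V_def\<close>)

lemma pset_eqI: "Rep_pset x = Rep_pset y \<Longrightarrow> x = y" by (simp add: Rep_pset_inject)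

lemmas Rep_ops = Rep_left Rep_right Rep_mid


lemma pset_axioms:
 shows
  "pset_left (pset_left x y) z = pset_left x (pset_left y z)"
  and
  "pset_left (pset_left x y) z = pset_left x (pset_right y z)"
  and
  "pset_left (pset_right x y) z = pset_right x (pset_left y z)"
  and
  "pset_right (pset_left x y) z = pset_right x (pset_right y z)"
  and
  "pset_right (pset_right x y) z = pset_right x (pset_right y z)"
  and
  "pset_left (pset_left x y) z = pset_left x (pset_mid y z)"
  and
  "pset_left (pset_mid x y) z = pset_mid x (pset_left y z)"
  and
  "pset_mid (pset_left x y) z = pset_mid x (pset_right y z)"
  and
  "pset_mid (pset_right x y) z = pset_right x (pset_mid y z)"
  and
  "pset_right (pset_mid x y) z = pset_right x (pset_right y z)"
  and
  "pset_mid (pset_mid x y) z = pset_mid x (pset_mid y z)"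
  by (rule pset_eqI, cases "Rep_pset x", cases "Rep_pset y", cases "Rep_pset z",
   simp add: Rep_ops image_image add.assoc image_Un Un_assoc)+

lemma part1: "assoc_trialgebra (pm_scale :: 'k::field \<Rightarrow> _) (bilin_ext pset_left) (bilin_ext pset_right) (bilin_ext pset_mid)"
  unfolding assoc_trialgebra_def
  by (simp only: pm_vs bilinear_bilin simp_thms, intro conjI allI bilin_assoc pset_axioms)




fun gA :: "('a \<Rightarrow> 'a \<Rightarrow> 'a) \<Rightarrow> ('a \<Rightarrow> 'a \<Rightarrow> 'a) \<Rightarrow> ('a \<Rightarrow> 'a \<Rightarrow> 'a) \<Rightarrow> 'a \<Rightarrow> nat \<Rightarrow> nat set \<Rightarrow> 'a" where
  "gA l r m a 0 X = a"
| "gA l r m a (Suc n) X = (if n = 0 then a else if n \<in> X then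
      (if X = {n} then r (gA l r m a n {0}) a else m (gA l r m a n (X - {n})) a)
      else l (gA l r m a n X) a)"

context
  fixes scaleA :: "'k::field \<Rightarrow> 'a::ab_group_add \<Rightarrow> 'a" and l r m :: "'a \<Rightarrow> 'a \<Rightarrow> 'a" and a :: 'a
  assumes AT: "assoc_trialgebra scaleA l r m"
begin

lemma ax:
  "l (l x y) z = l x (l y z)"
  "l (l x y) z = l x (r y z)"
  "l (r x y) z = r x (l y z)"
  "r (l x y) z = r x (r y z)"
  "r (r x y) z = r x (r y z)"
  "l (l x y) z = l x (m y z)"
  "l (m x y) z = m x (l y z)"
  "m (l x y) z = m x (r y z)"
  "m (r x y) z = r x (m y z)"
  "r (m x y) z = r x (r y z)"
  "m (m x y) z = m x (m y z)"
  using AT unfolding assoc_trialgebra_def by blast+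

abbreviation g where "g \<equiv> gA l r m a"

lemma g1[simp]: "g (Suc 0) X = a" by simp

lemma indepR: "V p X \<Longrightarrow> r (g p X) z = r (g p {0}) z"
proof (induction p arbitrary: X z)
  case 0 then show ?case by (simp add: V_def)
next
  case (Suc n)
  show ?case
  proof (cases "n = 0")
    case True then show ?thesis by simp
  next
    case n: False
    have g0: "g (Suc n) {0} = l (g n {0}) a" using n by simp
    have X: "X \<noteq> {}" "X \<subseteq> {..<Suc n}" using Suc.prems by (auto simp: V_def)
    show ?thesis
    proof (cases "n \<in> X")
      case False
      then have V: "V n X" using X n by (auto simp: V_def less_Suc_eq)
      show ?thesis using n False by (simp add: ax(4) Suc.IH[OF V])
    next
      case nX: True
      show ?thesis
      proof (cases "X = {n}")
        case True then show ?thesis using n by (simp add: ax(4,5))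
      next
        case False
        then have V: "V n (X - {n})" using X n nX by (auto simp: V_def less_Suc_eq)
        show ?thesis using n False nX by (simp add: ax(4,10) Suc.IH[OF V])
      qed
    qed
  qed
qed

lemma leftL: "V p X \<Longrightarrow> V q Y \<Longrightarrow> g (p + q) X = l (g p X) (g q Y)"
proof (induction q arbitrary: Y)
  case 0 then show ?case by (simp add: V_def)
next
  case (Suc n)
  have p: "p \<noteq> 0" "X \<subseteq> {..<p}" using Suc.prems by (auto simp: V_def)
  have pn: "p + n \<notin> X" "p + n \<noteq> 0" using p by auto
  have gL: "g (p + Suc n) X = l (g (p + n) X) a" using pn p by simp
  show ?case
  proof (cases "n = 0")
    case True then show ?thesis using gL by simp
  next
    case n: False
    have Y: "Y \<noteq> {}" "Y \<subseteq> {..<Suc n}" using Suc.prems by (auto simp: V_def)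
    show ?thesis
    proof (cases "n \<in> Y")
      case False
      then have V: "V n Y" using Y n by (auto simp: V_def less_Suc_eq)
      show ?thesis using n False gL by (simp add: ax(1) Suc.IH[OF Suc.prems(1) V])
    next
      case nY: True
      show ?thesis
      proof (cases "Y = {n}")
        case True
        have V: "V n {0}" using n by (auto simp: V_def)
        show ?thesis using n True gL by (simp add: ax(2) Suc.IH[OF Suc.prems(1) V])
      next
        case False
        then have V: "V n (Y - {n})" using Y n nY by (auto simp: V_def less_Suc_eq)
        show ?thesis using n False nY gL by (simp add: ax(6) Suc.IH[OF Suc.prems(1) V])
      qed
    qed
  qed
qed

lemma rightL: "V p X \<Longrightarrow> V q Y \<Longrightarrow> g (p + q) ((\<lambda>k. p + k) ` Y) = r (g p X) (g q Y)"
proof (induction q arbitrary: Y)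
  case 0 then show ?case by (simp add: V_def)
next
  case (Suc n)
  have p: "p \<noteq> 0" "X \<subseteq> {..<p}" using Suc.prems by (auto simp: V_def)
  have Y: "Y \<noteq> {}" "Y \<subseteq> {..<Suc n}" using Suc.prems by (auto simp: V_def)
  show ?case
  proof (cases "n = 0")
    case True
    then have "Y = {0}" using Y by auto
    then show ?thesis using True p indepR[OF Suc.prems(1)] by simp
  next
    case n: False
    show ?thesis
    proof (cases "n \<in> Y")
      case False
      then have V: "V n Y" using Y n by (auto simp: V_def less_Suc_eq)
      have "p + n \<notin> (\<lambda>k. p + k) ` Y" using False by auto
      then show ?thesis using n p False by (simp add: ax(3) Suc.IH[OF Suc.prems(1) V])
    next
      case nY: True
      show ?thesis
      proof (cases "Y = {n}")
        case True
        have V: "V n {0}" using n by (auto simp: V_def)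
        have V2: "V (p + n) {p}" using n p by (auto simp: V_def)
        have "r (g (p + n) {p}) a = r (g (p + n) {0}) a" by (rule indepR[OF V2])
        then show ?thesis using n p True by (simp add: ax(5)[symmetric] Suc.IH[OF Suc.prems(1) V, symmetric])
      next
        case False
        then have V: "V n (Y - {n})" using Y n nY by (auto simp: V_def less_Suc_eq)
        have e: "(\<lambda>k. p + k) ` Y - {p + n} = (\<lambda>k. p + k) ` (Y - {n})" by auto
        have ne: "(\<lambda>k. p + k) ` Y \<noteq> {p + n}"
        proof
          assume h: "(\<lambda>k. p + k) ` Y = {p + n}"
          have "\<forall>x\<in>Y. p + x = p + n" using h by blast
          then have "Y \<subseteq> {n}" by auto
          with nY False show False by auto
        qed
        show ?thesis using n p False nY ne by (simp add: e ax(9) Suc.IH[OF Suc.prems(1) V])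
      qed
    qed
  qed
qed

lemma midL: "V p X \<Longrightarrow> V q Y \<Longrightarrow> g (p + q) (X \<union> (\<lambda>k. p + k) ` Y) = m (g p X) (g q Y)"
proof (induction q arbitrary: Y)
  case 0 then show ?case by (simp add: V_def)
next
  case (Suc n)
  have p: "p \<noteq> 0" "X \<subseteq> {..<p}" "X \<noteq> {}" using Suc.prems by (auto simp: V_def)
  have Y: "Y \<noteq> {}" "Y \<subseteq> {..<Suc n}" using Suc.prems by (auto simp: V_def)
  show ?case
  proof (cases "n = 0")
    case True
    then have "Y = {0}" using Y by auto
    moreover have "X \<union> {p} \<noteq> {p}" "X \<union> {p} - {p} = X" using p by auto
    ultimately show ?thesis using True p by simp
  next
    case n: False
    show ?thesis
    proof (cases "n \<in> Y")
      case False
      then have V: "V n Y" using Y n by (auto simp: V_def less_Suc_eq)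
      have "p + n \<notin> X \<union> (\<lambda>k. p + k) ` Y" using False p by auto
      then show ?thesis using n p False by (simp add: ax(7) Suc.IH[OF Suc.prems(1) V])
    next
      case nY: True
      show ?thesis
      proof (cases "Y = {n}")
        case True
        have V: "V n {0}" using n by (auto simp: V_def)
        have e: "X \<union> {p + n} - {p + n} = X" "X \<union> {p + n} \<noteq> {p + n}" using p by auto
        show ?thesis using n p True e
          by (simp add: ax(8)[symmetric] leftL[OF Suc.prems(1) V, symmetric])
      next
        case False
        then have V: "V n (Y - {n})" using Y n nY by (auto simp: V_def less_Suc_eq)
        have e: "X \<union> (\<lambda>k. p + k) ` Y - {p + n} = X \<union> (\<lambda>k. p + k) ` (Y - {n})" using p by auto
        have ne: "X \<union> (\<lambda>k. p + k) ` Y \<noteq> {p + n}"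
        proof
          assume h: "X \<union> (\<lambda>k. p + k) ` Y = {p + n}"
          from p(3) obtain x where x: "x \<in> X" by blast
          then have "x = p + n" using h by blast
          moreover have "x < p" using p(2) x by auto
          ultimately show False by simp
        qed
        have "p + n \<in> X \<union> (\<lambda>k. p + k) ` Y" using nY by auto
        then show ?thesis using n p False nY ne by (simp add: e ax(11) Suc.IH[OF Suc.prems(1) V])
      qed
    qed
  qed
qed

end



lemma lin_add: "Vector_Spaces.linear s1 s2 h \<Longrightarrow> h (x + y) = h x + h y"
  unfolding Vector_Spaces.linear_def module_hom_def module_hom_axioms_def by blast
lemma lin_scale: "Vector_Spaces.linear s1 s2 h \<Longrightarrow> h (s1 c x) = s2 c (h x)"
  unfolding Vector_Spaces.linear_def module_hom_def module_hom_axioms_def by blast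
lemma lin_zero: "Vector_Spaces.linear s1 s2 (h :: 'b::ab_group_add \<Rightarrow> 'c::ab_group_add) \<Longrightarrow> h 0 = 0"
proof -
  assume L: "Vector_Spaces.linear s1 s2 h"
  have "h (0 + 0) = h 0 + h 0" by (rule lin_add[OF L])
  then show ?thesis by simp
qed
lemma lin_sum: "Vector_Spaces.linear s1 s2 (h :: 'b::ab_group_add \<Rightarrow> 'c::ab_group_add) \<Longrightarrow> h (sum u S) = (\<Sum>x\<in>S. h (u x))"
  by (induction S rule: infinite_finite_induct) (simp_all add: lin_zero lin_add)

definition fA where "fA l r m a x = gA l r m a (fst (Rep_pset x)) (snd (Rep_pset x))"
definition phiA where "phiA scaleA l r m a F = (\<Sum>x\<in>Poly_Mapping.keys F. scaleA (Poly_Mapping.lookup F x) (fA l r m a x))"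

definition gen :: pset where "gen = Abs_pset (1, {0})"

lemma Rep_gen: "Rep_pset gen = (1, {0})" unfolding gen_def by (rule Abs_inv) (simp add: V_def)

context
  fixes scaleA :: "'k::field \<Rightarrow> 'a::ab_group_add \<Rightarrow> 'a" and l r m :: "'a \<Rightarrow> 'a \<Rightarrow> 'a" and a :: 'a
  assumes AT: "assoc_trialgebra scaleA l r m"
begin

lemma MA: "module scaleA" using AT unfolding assoc_trialgebra_def vector_space_def module_def by blast

abbreviation f where "f \<equiv> fA l r m a"
abbreviation phi where "phi \<equiv> phiA scaleA l r m a"

lemma f_left: "f (pset_left x y) = l (f x) (f y)"
  unfolding fA_def using leftL[OF AT, of "fst (Rep_pset x)" "snd (Rep_pset x)" "fst (Rep_pset y)" "snd (Rep_pset y)"]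
  by (cases "Rep_pset x", cases "Rep_pset y") (simp add: Rep_left Rep_V)
lemma f_right: "f (pset_right x y) = r (f x) (f y)"
  unfolding fA_def using rightL[OF AT, of "fst (Rep_pset x)" "snd (Rep_pset x)" "fst (Rep_pset y)" "snd (Rep_pset y)"]
  by (cases "Rep_pset x", cases "Rep_pset y") (simp add: Rep_right Rep_V)
lemma f_mid: "f (pset_mid x y) = m (f x) (f y)"
  unfolding fA_def using midL[OF AT, of "fst (Rep_pset x)" "snd (Rep_pset x)" "fst (Rep_pset y)" "snd (Rep_pset y)"]
  by (cases "Rep_pset x", cases "Rep_pset y") (simp add: Rep_mid Rep_V)

lemma f_gen: "f gen = a" by (simp add: fA_def Rep_gen)

lemma phi_sup: "finite S \<Longrightarrow> Poly_Mapping.keys F \<subseteq> S \<Longrightarrow>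
   phi F = (\<Sum>x\<in>S. scaleA (Poly_Mapping.lookup F x) (f x))"
  unfolding phiA_def
  by (rule sum.mono_neutral_left) (auto simp: in_keys_iff module.scale_zero_left[OF MA])

lemma phi_add: "phi (F + G) = phi F + phi G"
proof -
  let ?S = "Poly_Mapping.keys F \<union> Poly_Mapping.keys G"
  have "phi (F + G) = (\<Sum>x\<in>?S. scaleA (Poly_Mapping.lookup (F + G) x) (f x))"
    by (rule phi_sup) (auto simp: keys_add_sub)
  also have "\<dots> = (\<Sum>x\<in>?S. scaleA (Poly_Mapping.lookup F x) (f x)) + (\<Sum>x\<in>?S. scaleA (Poly_Mapping.lookup G x) (f x))"
    by (simp add: lookup_add module.scale_left_distrib[OF MA] sum.distrib)
  also have "\<dots> = phi F + phi G" by (subst (1 2) phi_sup[of ?S]) auto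
  finally show ?thesis .
qed

lemma phi_scale: "phi (pm_scale c F) = scaleA c (phi F)"
proof -
  have "phi (pm_scale c F) = (\<Sum>x\<in>Poly_Mapping.keys F. scaleA (Poly_Mapping.lookup (pm_scale c F) x) (f x))"
    by (rule phi_sup) (auto simp: keys_scale_sub)
  also have "\<dots> = scaleA c (phi F)"
    by (simp add: phiA_def module.scale_sum_right[OF MA] module.scale_scale[OF MA])
  finally show ?thesis .
qed

lemma phi_single: "phi (Poly_Mapping.single z c) = scaleA c (f z)"
  by (subst phi_sup[of "{z}"]) auto

lemma phi_zero: "phi 0 = 0" by (simp add: phiA_def)

lemma phi_linear: "Vector_Spaces.linear pm_scale scaleA phi"
  unfolding Vector_Spaces.linear_def module_hom_def module_hom_axioms_def
  using pm_vs MA by (auto simp: vector_space_def module_def phi_add phi_scale)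

lemma opA_props:
  assumes "bilinear_op scaleA op"
  shows "op (u + v) w = op u w + op v w" "op u (v + w) = op u v + op u w"
    "op 0 w = 0" "op u 0 = 0" "op (scaleA c u) (scaleA d v) = scaleA (c * d) (op u v)"
proof -
  have L1: "Vector_Spaces.linear scaleA scaleA (op u)" for u using assms bilinear_op_def by blast
  have L2: "Vector_Spaces.linear scaleA scaleA (\<lambda>x. op x w)" for w using assms bilinear_op_def by blast
  show "op (u + v) w = op u w + op v w" using lin_add[OF L2] by simp
  show "op u (v + w) = op u v + op u w" using lin_add[OF L1] by simp
  show "op 0 w = 0" using lin_zero[OF L2] by simp
  show "op u 0 = 0" using lin_zero[OF L1] by simp
  show "op (scaleA c u) (scaleA d v) = scaleA (c * d) (op u v)"
    using lin_scale[OF L1, where c=d and x=v] lin_scale[OF L2, where c=c and x=u] module.scale_scale[OF MA]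
    by (simp add: mult.commute)
qed

lemma phi_mult:
  assumes B: "bilinear_op scaleA op" and H: "\<And>x y. f (opP x y) = op (f x) (f y)"
  shows "phi (bilin_ext opP F G) = op (phi F) (phi G)"
proof (induction F arbitrary: G rule: pm_induct)
  case (single x c)
  show ?case
  proof (induction G rule: pm_induct)
    case (single y d)
    show ?case by (simp add: bilin_single phi_single H opA_props(5)[OF B])
  qed (simp_all add: bilin_add_right phi_add phi_zero opA_props[OF B])
qed (simp_all add: bilin_add_left phi_add phi_zero opA_props[OF B])

lemma bilA: "bilinear_op scaleA l" "bilinear_op scaleA r" "bilinear_op scaleA m"
  using AT unfolding assoc_trialgebra_def by blast+

lemma existence: "trialgebra_morphism pm_scale (bilin_ext pset_left) (bilin_ext pset_right) (bilin_ext pset_mid)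
                                         scaleA l r m phi \<and> phi free_gen = a"
  unfolding trialgebra_morphism_def free_gen_def gen_def[symmetric]
  using phi_linear phi_mult[OF bilA(1) f_left] phi_mult[OF bilA(2) f_right] phi_mult[OF bilA(3) f_mid]
  by (simp add: phi_single module.scale_one[OF MA] f_gen)

lemma decomp: "Rep_pset x = (Suc n, X) \<Longrightarrow> n \<noteq> 0 \<Longrightarrow>
   \<exists>x'. fst (Rep_pset x') = n \<and> (x = pset_left x' gen \<or> x = pset_right x' gen \<or> x = pset_mid x' gen)"
proof -
  assume R: "Rep_pset x = (Suc n, X)" and n: "n \<noteq> 0"
  have X: "X \<noteq> {}" "X \<subseteq> {..<Suc n}" using Rep_V[OF R] by (auto simp: V_def)
  show ?thesis
  proof (cases "n \<in> X")
    case False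
    then have V: "V n X" using X n by (auto simp: V_def less_Suc_eq)
    have "x = pset_left (Abs_pset (n, X)) gen"
      by (rule pset_eqI) (simp add: Rep_left[OF Abs_inv[OF V] Rep_gen] R)
    then show ?thesis using Abs_inv[OF V] by (metis fst_conv)
  next
    case nX: True
    show ?thesis
    proof (cases "X = {n}")
      case True
      have V: "V n {0}" using n by (auto simp: V_def)
      have "x = pset_right (Abs_pset (n, {0})) gen"
        by (rule pset_eqI) (simp add: Rep_right[OF Abs_inv[OF V] Rep_gen] R True)
      then show ?thesis using Abs_inv[OF V] by (metis fst_conv)
    next
      case False
      then have V: "V n (X - {n})" using X n nX by (auto simp: V_def less_Suc_eq)
      have "X - {n} \<union> {n} = X" using nX by auto
      then have "x = pset_mid (Abs_pset (n, X - {n})) gen"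
        by (intro pset_eqI) (simp add: Rep_mid[OF Abs_inv[OF V] Rep_gen] R)
      then show ?thesis using Abs_inv[OF V] by (metis fst_conv)
    qed
  qed
qed

lemma uniqueness:
  assumes M: "trialgebra_morphism pm_scale (bilin_ext pset_left) (bilin_ext pset_right) (bilin_ext pset_mid)
                                         scaleA l r m psi" and G: "psi free_gen = a"
  shows "psi = phi"
proof -
  have L: "Vector_Spaces.linear pm_scale scaleA psi" using M trialgebra_morphism_def by blast
  have hom: "\<And>x y. psi (bilin_ext pset_left x y) = l (psi x) (psi y)"
    "\<And>x y. psi (bilin_ext pset_right x y) = r (psi x) (psi y)"
    "\<And>x y. psi (bilin_ext pset_mid x y) = m (psi x) (psi y)"
    using M trialgebra_morphism_def by blast+
  have gen1: "psi (Poly_Mapping.single gen 1) = a" using G unfolding free_gen_def gen_def .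
  have basis: "\<forall>x. fst (Rep_pset x) = n \<longrightarrow> psi (Poly_Mapping.single x 1) = f x" for n
  proof (induction n rule: less_induct)
    case (less n)
    show ?case
    proof (intro allI impI)
      fix x assume xn: "fst (Rep_pset x) = n"
      obtain X where R: "Rep_pset x = (n, X)" using xn by (cases "Rep_pset x") auto
      have n1: "1 \<le> n" using Rep_V[OF R] by (simp add: V_def)
      show "psi (Poly_Mapping.single x 1) = f x"
      proof (cases "n = 1")
        case True
        have "X = {0}" using Rep_V[OF R] True by (auto simp: V_def)
        then have "x = gen" using R True by (intro pset_eqI) (simp add: Rep_gen)
        then show ?thesis using gen1 f_gen by simp
      next
        case False
        then obtain k where k: "n = Suc k" "k \<noteq> 0" using n1 by (cases n) auto
        from decomp[OF R[unfolded k(1)] k(2)] obtain x' where x': "fst (Rep_pset x') = k"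
          "x = pset_left x' gen \<or> x = pset_right x' gen \<or> x = pset_mid x' gen" by blast
        have IH: "psi (Poly_Mapping.single x' 1) = f x'" using less x' k by auto
        have s: "Poly_Mapping.single (op x' gen) (1::'k) =
            bilin_ext op (Poly_Mapping.single x' 1) (Poly_Mapping.single gen 1)" for op
          by (simp add: bilin_single)
        from x'(2) show ?thesis
          by (elim disjE) (simp_all only: s hom IH gen1 f_left f_right f_mid f_gen)
      qed
    qed
  qed
  show ?thesis
  proof
    fix F :: "pset \<Rightarrow>\<^sub>0 'k"
    have "psi F = psi (\<Sum>x\<in>Poly_Mapping.keys F. pm_scale (Poly_Mapping.lookup F x) (Poly_Mapping.single x 1))"
      using pm_expand[of "Poly_Mapping.keys F" F] by (simp add: pm_scale_single)
    also have "\<dots> = (\<Sum>x\<in>Poly_Mapping.keys F. scaleA (Poly_Mapping.lookup F x) (f x))"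
      using basis by (simp add: lin_sum[OF L] lin_scale[OF L])
    finally show "psi F = phi F" by (simp add: phiA_def)
  qed
qed

end

theorem theorem1p7:
  fixes scaleA :: "'k::field \<Rightarrow> 'a::ab_group_add \<Rightarrow> 'a"
    and lA rA mA :: "'a \<Rightarrow> 'a \<Rightarrow> 'a"
  shows "assoc_trialgebra (pm_scale :: 'k \<Rightarrow> _) (bilin_ext pset_left) (bilin_ext pset_right) (bilin_ext pset_mid)
    \<and> (assoc_trialgebra scaleA lA rA mA \<longrightarrow>
        (\<forall>a. \<exists>!\<phi>. trialgebra_morphism pm_scale (bilin_ext pset_left) (bilin_ext pset_right) (bilin_ext pset_mid)
                                         scaleA lA rA mA \<phi>
                 \<and> \<phi> free_gen = a))"
proof (intro conjI impI allI)
  show "assoc_trialgebra (pm_scale :: 'k \<Rightarrow> _) (bilin_ext pset_left) (bilin_ext pset_right) (bilin_ext pset_mid)"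
    by (rule part1)
next
  fix a assume AT: "assoc_trialgebra scaleA lA rA mA"
  show "\<exists>!\<phi>. trialgebra_morphism pm_scale (bilin_ext pset_left) (bilin_ext pset_right) (bilin_ext pset_mid)
                                         scaleA lA rA mA \<phi> \<and> \<phi> free_gen = a"
    using existence[OF AT, of a] uniqueness[OF AT] by blast
qed


end
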